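(* In a finite-horizon MDP with wealth levels as described in the context, for the lower $\tau$-quantile criterion ($\tau\in(0,1]$) and for the upper $\tau$-quantile criterion ($\tau\in[0,1)$), there exists a deterministic wealth-Markovian policy that is optimal among all policies at horizon $T$.
   Context: An MDP $(\mathcal S,\mathcal A,\mathcal P,r,s_0)$ has finite state set, finite action set, transition probabilities, reward function $r:\mathcal S\times\mathcal A\to\mathcal R$, initial state $s_0$, and finite horizon $T$; policies are sequences of $T$ decision rules, in general history-dependent and randomized. The wealth of a history is $w(h_0)=w_0$, $w(h_t)=w(h_{t-1})\circ r(s_{t-1},a_{t-1})$ for a binary operation $\circ$ with left identity $w_0$. The set $\mathcal W_T$ of wealth levels of $T$-histories is totally ordered by $\preceq_{\mathcal W}$ with least and greatest elements. For a policy $\pi$, $p^\pi(w)$ is the probability that the generated $T$-history has wealth $w$; $F^\pi(w)=\sum_{w'\preceq_{\mathcal W}w}p^\pi(w')$, $G^\pi(w)=\sum_{w\preceq_{\mathcal W}w'}p^\pi(w')$. Lower $\tau$-quantile $\underline{q}^\pi_\tau=\min\{w:F^\pi(w)\ge\tau\}$, upper $\tau$-quantile $\overline{q}^\pi_\tau=\max\{w:G^\pi(w)\ge1-\tau\}$; a policy $\pi^*$ is optimal for the lower (resp. upper) criterion if its lower (resp. upper) $\tau$-quantile equals the maximum over all policies. A policy is deterministic wealth-Markovian if each of its decision rules deterministically selects an action as a function of the current state $s_t$ and the current wealth level $w(h_t)$ only. *)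

theory Defs
  imports "HOL-Analysis.Analysis"
begin

text \<open>The reward type 'r also carries the wealth levels: wealth is accumulated by a binary
  operation wop with left identity w0, and leW is the order on wealth levels.\<close>

record ('s, 'a, 'r) mdp =
  trans :: "'s \<Rightarrow> 'a \<Rightarrow> 's \<Rightarrow> real"
  rew   :: "'s \<Rightarrow> 'a \<Rightarrow> 'r"
  init  :: 's
  wop   :: "'r \<Rightarrow> 'r \<Rightarrow> 'r"
  w0    :: 'r
  leW   :: "'r \<Rightarrow> 'r \<Rightarrow> bool"

definition valid_mdp :: "('s::finite, 'a::finite, 'r) mdp \<Rightarrow> bool" where
  "valid_mdp M \<longleftrightarrow>
     (\<forall>s a s'. 0 \<le> trans M s a s') \<and> (\<forall>s a. (\<Sum>s'\<in>UNIV. trans M s a s') = 1) \<and>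
     (\<forall>x. wop M (w0 M) x = x)"

text \<open>A t-history s_0,a_0,...,a_{t-1},s_t is a pair (ss, as) with length ss = t+1,
  length as = t. T-histories start in the initial state.\<close>

definition histories :: "('s, 'a, 'r) mdp \<Rightarrow> nat \<Rightarrow> ('s list \<times> 'a list) set" where
  "histories M T = {(ss, as). length ss = Suc T \<and> length as = T \<and> hd ss = init M}"

definition wealth :: "('s, 'a, 'r) mdp \<Rightarrow> 's list \<Rightarrow> 'a list \<Rightarrow> 'r" where
  "wealth M ss as = foldl (\<lambda>w (s, a). wop M w (rew M s a)) (w0 M) (zip ss as)"

definition wealth_levels :: "('s, 'a, 'r) mdp \<Rightarrow> nat \<Rightarrow> 'r set" where
  "wealth_levels M T = (\<lambda>(ss, as). wealth M ss as) ` histories M T"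

definition wealth_order_ok :: "('s, 'a, 'r) mdp \<Rightarrow> nat \<Rightarrow> bool" where
  "wealth_order_ok M T \<longleftrightarrow>
     (let W = wealth_levels M T; le = leW M in
       (\<forall>x\<in>W. le x x) \<and>
       (\<forall>x\<in>W. \<forall>y\<in>W. le x y \<and> le y x \<longrightarrow> x = y) \<and>
       (\<forall>x\<in>W. \<forall>y\<in>W. \<forall>z\<in>W. le x y \<and> le y z \<longrightarrow> le x z) \<and>
       (\<forall>x\<in>W. \<forall>y\<in>W. le x y \<or> le y x) \<and>
       (\<exists>m\<in>W. \<forall>x\<in>W. le m x) \<and> (\<exists>m\<in>W. \<forall>x\<in>W. le x m))"

text \<open>A (history-dependent, randomized) policy: pi ss as a is the probability of choosing
  action a after history (ss, as); the decision rule at time t = length as.\<close>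

type_synonym ('s, 'a) policy = "'s list \<Rightarrow> 'a list \<Rightarrow> 'a \<Rightarrow> real"

definition valid_policy :: "nat \<Rightarrow> ('s, 'a::finite) policy \<Rightarrow> bool" where
  "valid_policy T \<pi> \<longleftrightarrow>
     (\<forall>ss as. length ss = Suc (length as) \<and> length as < T \<longrightarrow>
        (\<forall>a. 0 \<le> \<pi> ss as a) \<and> (\<Sum>a\<in>UNIV. \<pi> ss as a) = 1)"

definition hist_prob :: "('s, 'a, 'r) mdp \<Rightarrow> ('s, 'a) policy \<Rightarrow> 's list \<Rightarrow> 'a list \<Rightarrow> real" where
  "hist_prob M \<pi> ss as =
     (\<Prod>t<length as. \<pi> (take (Suc t) ss) (take t as) (as ! t) * trans M (ss ! t) (as ! t) (ss ! Suc t))"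

definition wprob :: "('s, 'a, 'r) mdp \<Rightarrow> nat \<Rightarrow> ('s, 'a) policy \<Rightarrow> 'r \<Rightarrow> real" where
  "wprob M T \<pi> w = (\<Sum>(ss, as)\<in>{h \<in> histories M T. (\<lambda>(ss, as). wealth M ss as) h = w}. hist_prob M \<pi> ss as)"

definition cdfW :: "('s, 'a, 'r) mdp \<Rightarrow> nat \<Rightarrow> ('s, 'a) policy \<Rightarrow> 'r \<Rightarrow> real" where
  "cdfW M T \<pi> w = (\<Sum>w'\<in>{w' \<in> wealth_levels M T. leW M w' w}. wprob M T \<pi> w')"

definition ccdfW :: "('s, 'a, 'r) mdp \<Rightarrow> nat \<Rightarrow> ('s, 'a) policy \<Rightarrow> 'r \<Rightarrow> real" where
  "ccdfW M T \<pi> w = (\<Sum>w'\<in>{w' \<in> wealth_levels M T. leW M w w'}. wprob M T \<pi> w')"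

definition lower_quantile :: "('s, 'a, 'r) mdp \<Rightarrow> nat \<Rightarrow> ('s, 'a) policy \<Rightarrow> real \<Rightarrow> 'r" where
  "lower_quantile M T \<pi> \<tau> =
     (THE w. w \<in> wealth_levels M T \<and> \<tau> \<le> cdfW M T \<pi> w \<and>
        (\<forall>w'\<in>wealth_levels M T. \<tau> \<le> cdfW M T \<pi> w' \<longrightarrow> leW M w w'))"

definition upper_quantile :: "('s, 'a, 'r) mdp \<Rightarrow> nat \<Rightarrow> ('s, 'a) policy \<Rightarrow> real \<Rightarrow> 'r" where
  "upper_quantile M T \<pi> \<tau> =
     (THE w. w \<in> wealth_levels M T \<and> 1 - \<tau> \<le> ccdfW M T \<pi> w \<and>
        (\<forall>w'\<in>wealth_levels M T. 1 - \<tau> \<le> ccdfW M T \<pi> w' \<longrightarrow> leW M w' w))"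

definition lower_optimal :: "('s, 'a::finite, 'r) mdp \<Rightarrow> nat \<Rightarrow> real \<Rightarrow> ('s, 'a) policy \<Rightarrow> bool" where
  "lower_optimal M T \<tau> \<pi> \<longleftrightarrow> valid_policy T \<pi> \<and>
     (\<forall>\<pi>'. valid_policy T \<pi>' \<longrightarrow> leW M (lower_quantile M T \<pi>' \<tau>) (lower_quantile M T \<pi> \<tau>))"

definition upper_optimal :: "('s, 'a::finite, 'r) mdp \<Rightarrow> nat \<Rightarrow> real \<Rightarrow> ('s, 'a) policy \<Rightarrow> bool" where
  "upper_optimal M T \<tau> \<pi> \<longleftrightarrow> valid_policy T \<pi> \<and>
     (\<forall>\<pi>'. valid_policy T \<pi>' \<longrightarrow> leW M (upper_quantile M T \<pi>' \<tau>) (upper_quantile M T \<pi> \<tau>))"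

definition det_wealth_markov :: "('s, 'a, 'r) mdp \<Rightarrow> nat \<Rightarrow> ('s, 'a) policy \<Rightarrow> bool" where
  "det_wealth_markov M T \<pi> \<longleftrightarrow>
     (\<exists>\<delta> :: nat \<Rightarrow> 's \<Rightarrow> 'r \<Rightarrow> 'a. \<forall>ss as a. length ss = Suc (length as) \<and> length as < T \<longrightarrow>
        \<pi> ss as a = (if a = \<delta> (length as) (last ss) (wealth M ss as) then 1 else 0))"

end

theory Submission
  imports Defs
begin

definition J :: "('s::finite, 'a::finite, 'r) mdp \<Rightarrow> nat \<Rightarrow> ('s, 'a) policy \<Rightarrow> ('r \<Rightarrow> real) \<Rightarrow> real" where
  "J M T \<pi> f = (\<Sum>(ss, as)\<in>histories M T. hist_prob M \<pi> ss as * f (wealth M ss as))"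

fun V :: "('s::finite, 'a::finite, 'r) mdp \<Rightarrow> ('s, 'a) policy \<Rightarrow> ('r \<Rightarrow> real) \<Rightarrow> nat \<Rightarrow> 's list \<Rightarrow> 'a list \<Rightarrow> real" where
  "V M \<pi> f 0 ss as = f (wealth M ss as)"
| "V M \<pi> f (Suc n) ss as = (\<Sum>a\<in>UNIV. \<pi> ss as a * (\<Sum>s'\<in>UNIV. trans M (last ss) a s' * V M \<pi> f n (ss @ [s']) (as @ [a])))"

definition amax :: "('a::finite \<Rightarrow> real) \<Rightarrow> 'a" where
  "amax g = (SOME a. \<forall>b. g b \<le> g a)"

lemma amax_ge: "g b \<le> g (amax (g :: 'a::finite \<Rightarrow> real))"
proof -
  have "\<exists>a. \<forall>b. g b \<le> g a"
  proof -
    have "Max (range g) \<in> range g" by (rule Max_in) auto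
    then obtain a where "Max (range g) = g a" by blast
    moreover have "\<forall>b. g b \<le> Max (range g)" by auto
    ultimately show ?thesis by metis
  qed
  then show ?thesis unfolding amax_def by (rule someI_ex[where P="\<lambda>a. \<forall>b. g b \<le> g a", THEN spec])
qed

fun U :: "('s::finite, 'a::finite, 'r) mdp \<Rightarrow> ('r \<Rightarrow> real) \<Rightarrow> nat \<Rightarrow> 's \<Rightarrow> 'r \<Rightarrow> real" where
  "U M f 0 s w = f w"
| "U M f (Suc n) s w = (let Q = (\<lambda>a. \<Sum>s'\<in>UNIV. trans M s a s' * U M f n s' (wop M w (rew M s a))) in Q (amax Q))"

definition QQ :: "('s::finite, 'a::finite, 'r) mdp \<Rightarrow> ('r \<Rightarrow> real) \<Rightarrow> nat \<Rightarrow> 's \<Rightarrow> 'r \<Rightarrow> 'a \<Rightarrow> real" where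
  "QQ M f n s w = (\<lambda>a. \<Sum>s'\<in>UNIV. trans M s a s' * U M f n s' (wop M w (rew M s a)))"

lemma U_Suc: "U M f (Suc n) s w = QQ M f n s w (amax (QQ M f n s w))"
  by (simp add: QQ_def Let_def)

lemma wealth_snoc:
  assumes "length ss = Suc (length as)"
  shows "wealth M (ss @ [s']) (as @ [a]) = wop M (wealth M ss as) (rew M (last ss) a)"
proof -
  have ne: "ss \<noteq> []" using assms by auto
  have ss: "ss = butlast ss @ [last ss]" using ne by simp
  have l: "length (butlast ss) = length as" using assms by simp
  have z1: "zip (ss @ [s']) (as @ [a]) = zip (butlast ss) as @ [(last ss, a)]"
    by (subst ss) (simp add: l zip_append1 assms)
  have z2: "zip ss as = zip (butlast ss) as"
    by (subst ss) (simp add: l zip_append1 assms)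
  show ?thesis unfolding wealth_def z1 z2 by simp
qed

lemma hist_prob_snoc:
  assumes "length ss = Suc (length as)"
  shows "hist_prob M \<pi> (ss @ [s']) (as @ [a]) = hist_prob M \<pi> ss as * (\<pi> ss as a * trans M (last ss) a s')"
proof -
  have ne: "ss \<noteq> []" using assms by auto
  have eq: "\<And>t. t < length as \<Longrightarrow> \<pi> (take (Suc t) (ss @ [s'])) (take t (as @ [a])) ((as @ [a]) ! t) *
       trans M ((ss @ [s']) ! t) ((as @ [a]) ! t) ((ss @ [s']) ! Suc t) =
     \<pi> (take (Suc t) ss) (take t as) (as ! t) * trans M (ss ! t) (as ! t) (ss ! Suc t)"
    using assms by (simp add: nth_append)
  have last: "\<pi> (take (Suc (length as)) (ss @ [s'])) (take (length as) (as @ [a])) ((as @ [a]) ! length as) *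
       trans M ((ss @ [s']) ! length as) ((as @ [a]) ! length as) ((ss @ [s']) ! Suc (length as))
     = \<pi> ss as a * trans M (last ss) a s'"
    using assms ne by (simp add: nth_append last_conv_nth)
  show ?thesis unfolding hist_prob_def
    using eq last by (simp add: prod.lessThan_Suc)
qed

lemma histories_0: "histories M 0 = {([init M], [])}"
  unfolding histories_def
  by (auto simp: length_Suc_conv)

lemma histories_Suc:
  "histories M (Suc k) = (\<lambda>((ss, as), a, s'). (ss @ [s'], as @ [a])) ` (histories M k \<times> UNIV)"
proof (rule set_eqI, rule iffI)
  fix h assume h: "h \<in> histories M (Suc k)"
  obtain ss' as' where hh: "h = (ss', as')" by (cases h)
  have l: "length ss' = Suc (Suc k)" "length as' = Suc k" "hd ss' = init M" using h hh by (auto simp: histories_def)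
  have ne: "ss' \<noteq> []" "as' \<noteq> []" using l by auto
  have e1: "ss' = butlast ss' @ [last ss']" "as' = butlast as' @ [last as']" using ne by simp_all
  have "butlast ss' \<noteq> []" using l by (cases ss') auto
  then have "hd (butlast ss') = init M" using l(3) e1(1) by (metis hd_append2)
  then have "(butlast ss', butlast as') \<in> histories M k" using l by (simp add: histories_def)
  then show "h \<in> (\<lambda>((ss, as), a, s'). (ss @ [s'], as @ [a])) ` (histories M k \<times> UNIV)"
    using hh e1 by (auto intro!: image_eqI[where x="((butlast ss', butlast as'), last as', last ss')"])
next
  fix h assume "h \<in> (\<lambda>((ss, as), a, s'). (ss @ [s'], as @ [a])) ` (histories M k \<times> UNIV)"
  then show "h \<in> histories M (Suc k)"
    by (auto simp: histories_def hd_append)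
qed

lemma inj_snoc: "inj_on (\<lambda>((ss, as), a, s'). (ss @ [s'], as @ [a])) X"
  by (auto simp: inj_on_def)

lemma finite_histories: "finite (histories (M :: ('s::finite, 'a::finite, 'r) mdp) T)"
proof -
  have "histories M T \<subseteq> {ss. set ss \<subseteq> UNIV \<and> length ss = Suc T} \<times> {as. set as \<subseteq> (UNIV::'a set) \<and> length as = T}"
    by (auto simp: histories_def)
  moreover have "finite ({ss. set ss \<subseteq> (UNIV::'s set) \<and> length ss = Suc T} \<times> {as. set as \<subseteq> (UNIV::'a set) \<and> length as = T})"
    by (intro finite_cartesian_product finite_lists_length_eq) auto
  ultimately show ?thesis by (rule finite_subset)
qed

lemma sum_hist_Suc:
  fixes M :: "('s::finite, 'a::finite, 'r) mdp"
  shows "(\<Sum>(ss, as)\<in>histories M (Suc k). hist_prob M \<pi> ss as * g ss as) =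
    (\<Sum>(ss, as)\<in>histories M k. hist_prob M \<pi> ss as *
       (\<Sum>a\<in>UNIV. \<pi> ss as a * (\<Sum>s'\<in>UNIV. trans M (last ss) a s' * g (ss @ [s']) (as @ [a]))))"
proof -
  let ?phi = "\<lambda>((ss, as), a, s'). (ss @ [s'], as @ [a])"
  have "(\<Sum>(ss, as)\<in>histories M (Suc k). hist_prob M \<pi> ss as * g ss as) =
      (\<Sum>x\<in>histories M k \<times> UNIV. (\<lambda>(ss, as). hist_prob M \<pi> ss as * g ss as) (?phi x))"
    unfolding histories_Suc by (rule sum.reindex[OF inj_snoc, unfolded comp_def])
  also have "\<dots> = (\<Sum>h\<in>histories M k. \<Sum>y\<in>UNIV. (\<lambda>(ss, as). hist_prob M \<pi> ss as * g ss as) (?phi (h, y)))"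
    by (subst sum.cartesian_product) (simp add: split_def)
  also have "\<dots> = (\<Sum>h\<in>histories M k. \<Sum>a\<in>UNIV. \<Sum>s'\<in>UNIV. (\<lambda>(ss, as). hist_prob M \<pi> ss as * g ss as) (?phi (h, (a, s'))))"
    by (simp add: UNIV_Times_UNIV[symmetric] sum.cartesian_product del: UNIV_Times_UNIV)
  also have "\<dots> = (\<Sum>(ss, as)\<in>histories M k. hist_prob M \<pi> ss as *
       (\<Sum>a\<in>UNIV. \<pi> ss as a * (\<Sum>s'\<in>UNIV. trans M (last ss) a s' * g (ss @ [s']) (as @ [a]))))"
  proof (rule sum.cong[OF refl])
    fix h assume "h \<in> histories M k"
    then obtain ss as where h: "h = (ss, as)" "length ss = Suc (length as)" by (cases h) (auto simp: histories_def)
    show "(\<Sum>a\<in>UNIV. \<Sum>s'\<in>UNIV. (\<lambda>(ss, as). hist_prob M \<pi> ss as * g ss as) (?phi (h, (a, s')))) =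
      (\<lambda>(ss, as). hist_prob M \<pi> ss as *
       (\<Sum>a\<in>UNIV. \<pi> ss as a * (\<Sum>s'\<in>UNIV. trans M (last ss) a s' * g (ss @ [s']) (as @ [a])))) h"
      using h by (simp add: hist_prob_snoc sum_distrib_left mult_ac)
  qed
  finally show ?thesis .
qed

lemma J_V:
  fixes M :: "('s::finite, 'a::finite, 'r) mdp"
  shows "k + n = T \<Longrightarrow> J M T \<pi> f = (\<Sum>(ss, as)\<in>histories M k. hist_prob M \<pi> ss as * V M \<pi> f n ss as)"
proof (induction n arbitrary: k)
  case 0
  then show ?case by (simp add: J_def)
next
  case (Suc n)
  then have "J M T \<pi> f = (\<Sum>(ss, as)\<in>histories M (Suc k). hist_prob M \<pi> ss as * V M \<pi> f n ss as)"
    by simp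
  also have "\<dots> = (\<Sum>(ss, as)\<in>histories M k. hist_prob M \<pi> ss as * V M \<pi> f (Suc n) ss as)"
    by (subst sum_hist_Suc) simp
  finally show ?case .
qed

lemma J_V0:
  fixes M :: "('s::finite, 'a::finite, 'r) mdp"
  shows "J M T \<pi> f = V M \<pi> f T [init M] []"
  using J_V[of 0 T T M \<pi> f] by (simp add: histories_0 hist_prob_def)

lemma V_le:
  fixes M :: "('s::finite, 'a::finite, 'r) mdp"
  assumes vm: "valid_mdp M" and vp: "valid_policy T \<pi>"
  shows "length ss = Suc (length as) \<Longrightarrow> length as + n \<le> T \<Longrightarrow>
    V M \<pi> f n ss as \<le> U M f n (last ss) (wealth M ss as)"
proof (induction n arbitrary: ss as)
  case 0
  then show ?case by simp
next
  case (Suc n)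
  let ?w = "wealth M ss as"
  let ?Q = "QQ M f n (last ss) ?w"
  have pv: "\<And>a. 0 \<le> \<pi> ss as a" "(\<Sum>a\<in>UNIV. \<pi> ss as a) = 1"
    using vp Suc.prems unfolding valid_policy_def by auto
  have tr: "\<And>s a s'. 0 \<le> trans M s a s'" using vm unfolding valid_mdp_def by auto
  have inner: "(\<Sum>s'\<in>UNIV. trans M (last ss) a s' * V M \<pi> f n (ss @ [s']) (as @ [a])) \<le> ?Q a" for a
    unfolding QQ_def
  proof (rule sum_mono)
    fix s'
    have "V M \<pi> f n (ss @ [s']) (as @ [a]) \<le> U M f n s' (wealth M (ss @ [s']) (as @ [a]))"
      using Suc.IH[of "ss @ [s']" "as @ [a]"] Suc.prems by simp
    show "trans M (last ss) a s' * V M \<pi> f n (ss @ [s']) (as @ [a]) \<le>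
        trans M (last ss) a s' * U M f n s' (wop M ?w (rew M (last ss) a))"
    proof (rule mult_left_mono)
      show "V M \<pi> f n (ss @ [s']) (as @ [a]) \<le> U M f n s' (wop M ?w (rew M (last ss) a))"
        using \<open>V M \<pi> f n (ss @ [s']) (as @ [a]) \<le> _\<close> by (simp add: wealth_snoc[OF Suc.prems(1)])
    qed (rule tr)
  qed
  have "V M \<pi> f (Suc n) ss as \<le> (\<Sum>a\<in>UNIV. \<pi> ss as a * ?Q (amax ?Q))"
    unfolding V.simps
  proof (rule sum_mono)
    fix a
    have "(\<Sum>s'\<in>UNIV. trans M (last ss) a s' * V M \<pi> f n (ss @ [s']) (as @ [a])) \<le> ?Q (amax ?Q)"
      using inner[of a] amax_ge[of ?Q a] by linarith
    then show "\<pi> ss as a * (\<Sum>s'\<in>UNIV. trans M (last ss) a s' * V M \<pi> f n (ss @ [s']) (as @ [a])) \<le> \<pi> ss as a * ?Q (amax ?Q)"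
      using pv by (simp add: mult_left_mono)
  qed
  also have "\<dots> = ?Q (amax ?Q)" using pv by (simp add: sum_distrib_right[symmetric])
  finally show ?case by (simp only: U_Suc)
qed

definition dpol :: "('s::finite, 'a::finite, 'r) mdp \<Rightarrow> ('r \<Rightarrow> real) \<Rightarrow> nat \<Rightarrow> ('s, 'a) policy" where
  "dpol M f T = (\<lambda>ss as a. if a = amax (QQ M f (T - Suc (length as)) (last ss) (wealth M ss as)) then 1 else 0)"

lemma V_det:
  fixes M :: "('s::finite, 'a::finite, 'r) mdp"
  shows "length ss = Suc (length as) \<Longrightarrow> length as + n = T \<Longrightarrow>
    V M (dpol M f T) f n ss as = U M f n (last ss) (wealth M ss as)"
proof (induction n arbitrary: ss as)
  case 0
  then show ?case by simp
next
  case (Suc n)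
  let ?w = "wealth M ss as"
  let ?Q = "QQ M f n (last ss) ?w"
  have tn: "T - Suc (length as) = n" using Suc.prems by simp
  have "V M (dpol M f T) f (Suc n) ss as =
     (\<Sum>a\<in>UNIV. (if a = amax ?Q then 1 else 0) * (\<Sum>s'\<in>UNIV. trans M (last ss) a s' * V M (dpol M f T) f n (ss @ [s']) (as @ [a])))"
    by (simp add: dpol_def tn)
  also have "\<dots> = (\<Sum>a\<in>UNIV. (if a = amax ?Q then 1 else 0) * ?Q a)"
  proof (rule sum.cong[OF refl])
    fix a
    have "(\<Sum>s'\<in>UNIV. trans M (last ss) a s' * V M (dpol M f T) f n (ss @ [s']) (as @ [a])) = ?Q a"
      unfolding QQ_def
      using Suc.IH Suc.prems by (simp add: wealth_snoc[OF Suc.prems(1)])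
    then show "(if a = amax ?Q then 1 else 0) * (\<Sum>s'\<in>UNIV. trans M (last ss) a s' * V M (dpol M f T) f n (ss @ [s']) (as @ [a])) =
      (if a = amax ?Q then 1 else 0) * ?Q a" by simp
  qed
  also have "\<dots> = ?Q (amax ?Q)"
    by (simp add: if_distrib[where f="\<lambda>x. x * _"] cong: if_cong)
  finally show ?case by (simp only: U_Suc)
qed

lemma dpol_valid: "valid_policy T (dpol M f T)"
  unfolding valid_policy_def dpol_def by (simp add: if_distrib cong: if_cong)

lemma dpol_det: "det_wealth_markov M T (dpol M f T)"
  unfolding det_wealth_markov_def dpol_def
  by (rule exI[where x="\<lambda>k s w. amax (QQ M f (T - Suc k) s w)"]) simp

lemma dp:
  fixes M :: "('s::finite, 'a::finite, 'r) mdp"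
  assumes "valid_mdp M"
  shows "\<exists>\<pi>. det_wealth_markov M T \<pi> \<and> valid_policy T \<pi> \<and>
     (\<forall>\<pi>'. valid_policy T \<pi>' \<longrightarrow> J M T \<pi>' f \<le> J M T \<pi> f)"
proof (intro exI conjI allI impI)
  show "det_wealth_markov M T (dpol M f T)" by (rule dpol_det)
  show "valid_policy T (dpol M f T)" by (rule dpol_valid)
  fix \<pi>' :: "('s, 'a) policy" assume "valid_policy T \<pi>'"
  then have "V M \<pi>' f T [init M] [] \<le> U M f T (init M) (wealth M [init M] [])"
    using V_le[OF assms \<open>valid_policy T \<pi>'\<close>, of "[init M]" "[]" T] by simp
  also have "\<dots> = V M (dpol M f T) f T [init M] []" using V_det[where ss="[init M]" and as="[]" and n=T and M=M and f=f and T=T] by simp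
  finally show "J M T \<pi>' f \<le> J M T (dpol M f T) f" by (simp add: J_V0)
qed

lemma V_one:
  fixes M :: "('s::finite, 'a::finite, 'r) mdp"
  assumes vm: "valid_mdp M" and vp: "valid_policy T \<pi>"
  shows "length ss = Suc (length as) \<Longrightarrow> length as + n \<le> T \<Longrightarrow> V M \<pi> (\<lambda>_. 1) n ss as = 1"
proof (induction n arbitrary: ss as)
  case 0
  then show ?case by simp
next
  case (Suc n)
  have pv: "(\<Sum>a\<in>UNIV. \<pi> ss as a) = 1"
    using vp Suc.prems unfolding valid_policy_def by auto
  have tr: "\<And>s a. (\<Sum>s'\<in>UNIV. trans M s a s') = 1" using vm unfolding valid_mdp_def by auto
  show ?case using Suc.IH Suc.prems by (simp add: tr pv)
qed

lemma J_one:
  fixes M :: "('s::finite, 'a::finite, 'r) mdp"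
  assumes "valid_mdp M" "valid_policy T \<pi>"
  shows "J M T \<pi> (\<lambda>_. 1) = 1"
  using V_one[OF assms, of "[init M]" "[]" T] by (simp add: J_V0)

lemma hist_prob_nonneg:
  fixes M :: "('s::finite, 'a::finite, 'r) mdp"
  assumes vm: "valid_mdp M" and vp: "valid_policy T \<pi>" and h: "(ss, as) \<in> histories M T"
  shows "0 \<le> hist_prob M \<pi> ss as"
  unfolding hist_prob_def
proof (rule prod_nonneg)
  fix t assume "t \<in> {..<length as}"
  then have t: "t < length as" by simp
  have l: "length ss = Suc T" "length as = T" using h by (auto simp: histories_def)
  have "0 \<le> \<pi> (take (Suc t) ss) (take t as) (as ! t)"
    using vp t l unfolding valid_policy_def by auto
  moreover have "0 \<le> trans M (ss ! t) (as ! t) (ss ! Suc t)" using vm unfolding valid_mdp_def by auto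
  ultimately show "0 \<le> \<pi> (take (Suc t) ss) (take t as) (as ! t) * trans M (ss ! t) (as ! t) (ss ! Suc t)"
    by simp
qed

locale tord =
  fixes W :: "'r set" and le :: "'r \<Rightarrow> 'r \<Rightarrow> bool"
  assumes fin: "finite W" and nonempty: "W \<noteq> {}"
    and rfl: "\<And>x. x\<in>W \<Longrightarrow> le x x"
    and antis: "\<And>x y. x\<in>W \<Longrightarrow> y\<in>W \<Longrightarrow> le x y \<Longrightarrow> le y x \<Longrightarrow> x = y"
    and trn: "\<And>x y z. x\<in>W \<Longrightarrow> y\<in>W \<Longrightarrow> z\<in>W \<Longrightarrow> le x y \<Longrightarrow> le y z \<Longrightarrow> le x z"
    and total: "\<And>x y. x\<in>W \<Longrightarrow> y\<in>W \<Longrightarrow> le x y \<or> le y x"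
begin

lemma has_max: "finite C \<Longrightarrow> C \<noteq> {} \<Longrightarrow> C \<subseteq> W \<Longrightarrow> \<exists>m\<in>C. \<forall>x\<in>C. le x m"
proof (induction C rule: finite_ne_induct)
  case (singleton x)
  then show ?case using rfl by auto
next
  case (insert x F)
  then obtain m where m: "m \<in> F" "\<forall>y\<in>F. le y m" by auto
  show ?case
  proof (cases "le m x")
    case True
    have "\<forall>y\<in>insert x F. le y x"
    proof
      fix y assume y: "y \<in> insert x F"
      show "le y x"
      proof (cases "y = x")
        case True then show ?thesis using rfl insert.prems by auto
      next
        case False
        then have "y \<in> F" using y by auto
        then show ?thesis using trn[of y m x] m \<open>le m x\<close> insert.prems by auto
      qed
    qed
    then show ?thesis by auto
  next
    case False
    then have "le x m" using total[of x m] insert.prems m by auto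
    then show ?thesis using m by auto
  qed
qed

lemma has_min: "finite C \<Longrightarrow> C \<noteq> {} \<Longrightarrow> C \<subseteq> W \<Longrightarrow> \<exists>m\<in>C. \<forall>x\<in>C. le m x"
proof (induction C rule: finite_ne_induct)
  case (singleton x)
  then show ?case using rfl by auto
next
  case (insert x F)
  then obtain m where m: "m \<in> F" "\<forall>y\<in>F. le m y" by auto
  show ?case
  proof (cases "le x m")
    case True
    have "\<forall>y\<in>insert x F. le x y"
    proof
      fix y assume y: "y \<in> insert x F"
      show "le x y"
      proof (cases "y = x")
        case True then show ?thesis using rfl insert.prems by auto
      next
        case False
        then have "y \<in> F" using y by auto
        then show ?thesis using trn[of x m y] m \<open>le x m\<close> insert.prems by auto
      qed
    qed
    then show ?thesis by auto
  next
    case False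
    then have "le m x" using total[of m x] insert.prems m by auto
    then show ?thesis using m by auto
  qed
qed

lemma lq_ex:
  assumes p0: "\<forall>w\<in>W. 0 \<le> p w" and p1: "sum p W = 1" and t1: "(\<tau>::real) \<le> 1"
  shows "\<exists>!q. q \<in> W \<and> \<tau> \<le> (\<Sum>w'\<in>{w'\<in>W. le w' q}. p w') \<and>
     (\<forall>w'\<in>W. \<tau> \<le> (\<Sum>w''\<in>{w''\<in>W. le w'' w'}. p w'') \<longrightarrow> le q w')"
proof -
  obtain mx where mx: "mx \<in> W" "\<forall>x\<in>W. le x mx" using has_max[OF fin nonempty] by auto
  have "{w'\<in>W. le w' mx} = W" using mx by auto
  then have "mx \<in> {w\<in>W. \<tau> \<le> (\<Sum>w'\<in>{w'\<in>W. le w' w}. p w')}" using mx p1 t1 by simp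
  then obtain q where q: "q \<in> {w\<in>W. \<tau> \<le> (\<Sum>w'\<in>{w'\<in>W. le w' w}. p w')}"
     "\<forall>x\<in>{w\<in>W. \<tau> \<le> (\<Sum>w'\<in>{w'\<in>W. le w' w}. p w')}. le q x"
    using has_min[of "{w\<in>W. \<tau> \<le> (\<Sum>w'\<in>{w'\<in>W. le w' w}. p w')}"] fin by fastforce
  show ?thesis
  proof (rule ex1I[of _ q])
    show "q \<in> W \<and> \<tau> \<le> (\<Sum>w'\<in>{w'\<in>W. le w' q}. p w') \<and>
     (\<forall>w'\<in>W. \<tau> \<le> (\<Sum>w''\<in>{w''\<in>W. le w'' w'}. p w'') \<longrightarrow> le q w')" using q by auto
  next
    fix y assume "y \<in> W \<and> \<tau> \<le> (\<Sum>w'\<in>{w'\<in>W. le w' y}. p w') \<and>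
     (\<forall>w'\<in>W. \<tau> \<le> (\<Sum>w''\<in>{w''\<in>W. le w'' w'}. p w'') \<longrightarrow> le y w')"
    then show "y = q" using q antis[of y q] by auto
  qed
qed

lemma lq_ge:
  assumes p0: "\<forall>w\<in>W. 0 \<le> p w" and tp: "0 < (\<tau>::real)"
    and q: "q \<in> W" "\<tau> \<le> (\<Sum>w'\<in>{w'\<in>W. le w' q}. p w')"
       "\<forall>w'\<in>W. \<tau> \<le> (\<Sum>w''\<in>{w''\<in>W. le w'' w'}. p w'') \<longrightarrow> le q w'"
    and v: "v \<in> W"
  shows "le v q \<longleftrightarrow> (\<Sum>w\<in>{w\<in>W. le w v \<and> w \<noteq> v}. p w) < \<tau>"
proof
  assume lvq: "le v q"
  show "(\<Sum>w\<in>{w\<in>W. le w v \<and> w \<noteq> v}. p w) < \<tau>"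
  proof (cases "{w\<in>W. le w v \<and> w \<noteq> v} = {}")
    case True
    have "(\<Sum>w\<in>{w\<in>W. le w v \<and> w \<noteq> v}. p w) = 0" by (subst True) simp
    then show ?thesis using tp by simp
  next
    case False
    obtain m where m: "m \<in> {w\<in>W. le w v \<and> w \<noteq> v}" "\<forall>x\<in>{w\<in>W. le w v \<and> w \<noteq> v}. le x m"
      using has_max[OF _ False] fin by fastforce
    have eq: "{w'\<in>W. le w' m} = {w\<in>W. le w v \<and> w \<noteq> v}"
    proof (rule set_eqI, rule iffI)
      fix w' assume w': "w' \<in> {w'\<in>W. le w' m}"
      have "le w' v" using w' m trn[of w' m v] v by auto
      moreover have "w' \<noteq> v" using w' m antis[of m v] v by auto
      ultimately show "w' \<in> {w\<in>W. le w v \<and> w \<noteq> v}" using w' by auto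
    next
      fix w' assume "w' \<in> {w\<in>W. le w v \<and> w \<noteq> v}"
      then show "w' \<in> {w'\<in>W. le w' m}" using m by auto
    qed
    show ?thesis
    proof (rule ccontr)
      assume "\<not> (\<Sum>w\<in>{w\<in>W. le w v \<and> w \<noteq> v}. p w) < \<tau>"
      then have "\<tau> \<le> (\<Sum>w''\<in>{w''\<in>W. le w'' m}. p w'')" unfolding eq by simp
      then have "le q m" using q(3) m(1) by auto
      then have "le v m" using lvq trn[of v q m] q v m by auto
      then show False using m antis[of m v] v by auto
    qed
  qed
next
  assume S: "(\<Sum>w\<in>{w\<in>W. le w v \<and> w \<noteq> v}. p w) < \<tau>"
  show "le v q"
  proof (rule ccontr)
    assume n: "\<not> le v q"
    then have "le q v" using total[of q v] q v by auto
    have sub: "{w'\<in>W. le w' q} \<subseteq> {w\<in>W. le w v \<and> w \<noteq> v}"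
    proof
      fix w' assume w': "w' \<in> {w'\<in>W. le w' q}"
      then have "le w' v" using \<open>le q v\<close> trn[of w' q v] q v by auto
      moreover have "w' \<noteq> v" using w' n by auto
      ultimately show "w' \<in> {w\<in>W. le w v \<and> w \<noteq> v}" using w' by auto
    qed
    have "(\<Sum>w'\<in>{w'\<in>W. le w' q}. p w') \<le> (\<Sum>w\<in>{w\<in>W. le w v \<and> w \<noteq> v}. p w)"
      by (rule sum_mono2) (use fin sub p0 in auto)
    then show False using q S by linarith
  qed
qed

lemma uq_ex:
  assumes p0: "\<forall>w\<in>W. 0 \<le> p w" and p1: "sum p W = 1" and t0: "0 \<le> (\<tau>::real)"
  shows "\<exists>!q. q \<in> W \<and> 1 - \<tau> \<le> (\<Sum>w'\<in>{w'\<in>W. le q w'}. p w') \<and>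
     (\<forall>w'\<in>W. 1 - \<tau> \<le> (\<Sum>w''\<in>{w''\<in>W. le w' w''}. p w'') \<longrightarrow> le w' q)"
proof -
  obtain mn where mn: "mn \<in> W" "\<forall>x\<in>W. le mn x" using has_min[OF fin nonempty] by auto
  have "{w'\<in>W. le mn w'} = W" using mn by auto
  then have "mn \<in> {w\<in>W. 1 - \<tau> \<le> (\<Sum>w'\<in>{w'\<in>W. le w w'}. p w')}" using mn p1 t0 by simp
  then obtain q where q: "q \<in> {w\<in>W. 1 - \<tau> \<le> (\<Sum>w'\<in>{w'\<in>W. le w w'}. p w')}"
     "\<forall>x\<in>{w\<in>W. 1 - \<tau> \<le> (\<Sum>w'\<in>{w'\<in>W. le w w'}. p w')}. le x q"
    using has_max[of "{w\<in>W. 1 - \<tau> \<le> (\<Sum>w'\<in>{w'\<in>W. le w w'}. p w')}"] fin by fastforce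
  show ?thesis
  proof (rule ex1I[of _ q])
    show "q \<in> W \<and> 1 - \<tau> \<le> (\<Sum>w'\<in>{w'\<in>W. le q w'}. p w') \<and>
     (\<forall>w'\<in>W. 1 - \<tau> \<le> (\<Sum>w''\<in>{w''\<in>W. le w' w''}. p w'') \<longrightarrow> le w' q)" using q by auto
  next
    fix y assume "y \<in> W \<and> 1 - \<tau> \<le> (\<Sum>w'\<in>{w'\<in>W. le y w'}. p w') \<and>
     (\<forall>w'\<in>W. 1 - \<tau> \<le> (\<Sum>w''\<in>{w''\<in>W. le w' w''}. p w'') \<longrightarrow> le w' y)"
    then show "y = q" using q antis[of y q] by auto
  qed
qed

lemma uq_ge:
  assumes p0: "\<forall>w\<in>W. 0 \<le> p w"
    and q: "q \<in> W" "1 - (\<tau>::real) \<le> (\<Sum>w'\<in>{w'\<in>W. le q w'}. p w')"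
       "\<forall>w'\<in>W. 1 - \<tau> \<le> (\<Sum>w''\<in>{w''\<in>W. le w' w''}. p w'') \<longrightarrow> le w' q"
    and v: "v \<in> W"
  shows "le v q \<longleftrightarrow> 1 - \<tau> \<le> (\<Sum>w\<in>{w\<in>W. le v w}. p w)"
proof
  assume lvq: "le v q"
  have sub: "{w'\<in>W. le q w'} \<subseteq> {w\<in>W. le v w}" using lvq trn[of v q] q v by auto
  have "(\<Sum>w'\<in>{w'\<in>W. le q w'}. p w') \<le> (\<Sum>w\<in>{w\<in>W. le v w}. p w)"
    by (rule sum_mono2) (use fin sub p0 in auto)
  then show "1 - \<tau> \<le> (\<Sum>w\<in>{w\<in>W. le v w}. p w)" using q by linarith
next
  assume "1 - \<tau> \<le> (\<Sum>w\<in>{w\<in>W. le v w}. p w)"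
  then show "le v q" using q(3) v by auto
qed

end

lemma sum_wprob:
  fixes M :: "('s::finite, 'a::finite, 'r) mdp"
  shows "(\<Sum>w'\<in>{w\<in>wealth_levels M T. R w}. wprob M T \<pi> w') = J M T \<pi> (\<lambda>w. if R w then 1 else 0)"
proof -
  let ?H = "histories M T" and ?g = "\<lambda>(ss, as). wealth M ss as" and ?hp = "\<lambda>(ss, as). hist_prob M \<pi> ss as"
  have fH: "finite ?H" by (rule finite_histories)
  have "J M T \<pi> (\<lambda>w. if R w then 1 else 0) = (\<Sum>h\<in>?H. if R (?g h) then ?hp h else 0)"
    unfolding J_def by (rule sum.cong) auto
  also have "\<dots> = (\<Sum>h\<in>{h\<in>?H. R (?g h)}. ?hp h)"
    by (rule sum.inter_filter[symmetric, OF fH])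
  also have "\<dots> = (\<Sum>y\<in>{w\<in>wealth_levels M T. R w}. \<Sum>h\<in>{x \<in> {h\<in>?H. R (?g h)}. ?g x = y}. ?hp h)"
    by (rule sum.group[symmetric]) (use fH in \<open>auto simp: wealth_levels_def\<close>)
  also have "\<dots> = (\<Sum>w'\<in>{w\<in>wealth_levels M T. R w}. wprob M T \<pi> w')"
  proof (rule sum.cong[OF refl])
    fix y assume "y \<in> {w\<in>wealth_levels M T. R w}"
    then have "{x \<in> {h\<in>?H. R (?g h)}. ?g x = y} = {h \<in> ?H. ?g h = y}" by auto
    then show "(\<Sum>h\<in>{x \<in> {h\<in>?H. R (?g h)}. ?g x = y}. ?hp h) = wprob M T \<pi> y"
      unfolding wprob_def by simp
  qed
  finally show ?thesis by simp
qed

lemma J_neg: "J M T \<pi> (\<lambda>w. - g w) = - J M T \<pi> g"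
  unfolding J_def by (simp add: case_prod_beta sum_negf)

lemma wprob_nonneg:
  fixes M :: "('s::finite, 'a::finite, 'r) mdp"
  assumes "valid_mdp M" "valid_policy T \<pi>"
  shows "0 \<le> wprob M T \<pi> w"
  unfolding wprob_def
  by (rule sum_nonneg) (use hist_prob_nonneg[OF assms] in auto)

lemma wprob_sum1:
  fixes M :: "('s::finite, 'a::finite, 'r) mdp"
  assumes "valid_mdp M" "valid_policy T \<pi>"
  shows "sum (wprob M T \<pi>) (wealth_levels M T) = 1"
  using sum_wprob[where R="\<lambda>_. True" and M=M and T=T and \<pi>=\<pi>] J_one[OF assms] by simp

lemma finite_wl: "finite (wealth_levels (M :: ('s::finite, 'a::finite, 'r) mdp) T)"
  unfolding wealth_levels_def by (rule finite_imageI[OF finite_histories])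

lemma tord_wl:
  fixes M :: "('s::finite, 'a::finite, 'r) mdp"
  assumes "wealth_order_ok M T"
  shows "tord (wealth_levels M T) (leW M)"
proof -
  let ?W = "wealth_levels M T" and ?le = "leW M"
  have o: "(\<forall>x\<in>?W. ?le x x) \<and>
       (\<forall>x\<in>?W. \<forall>y\<in>?W. ?le x y \<and> ?le y x \<longrightarrow> x = y) \<and>
       (\<forall>x\<in>?W. \<forall>y\<in>?W. \<forall>z\<in>?W. ?le x y \<and> ?le y z \<longrightarrow> ?le x z) \<and>
       (\<forall>x\<in>?W. \<forall>y\<in>?W. ?le x y \<or> ?le y x) \<and>
       (\<exists>m\<in>?W. \<forall>x\<in>?W. ?le m x) \<and> (\<exists>m\<in>?W. \<forall>x\<in>?W. ?le x m)"
    using assms unfolding wealth_order_ok_def Let_def .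
  show ?thesis
  proof
    show "finite ?W" by (rule finite_wl)
    show "?W \<noteq> {}" using o by blast
    show "\<And>x. x \<in> ?W \<Longrightarrow> ?le x x" using o by blast
    show "\<And>x y. x \<in> ?W \<Longrightarrow> y \<in> ?W \<Longrightarrow> ?le x y \<Longrightarrow> ?le y x \<Longrightarrow> x = y"
      using o by blast
    show "\<And>x y z. x \<in> ?W \<Longrightarrow> y \<in> ?W \<Longrightarrow> z \<in> ?W \<Longrightarrow> ?le x y \<Longrightarrow> ?le y z \<Longrightarrow> ?le x z"
    proof -
      fix x y z assume "x \<in> ?W" "y \<in> ?W" "z \<in> ?W" "?le x y" "?le y z"
      then show "?le x z" using o by meson
    qed
    show "\<And>x y. x \<in> ?W \<Longrightarrow> y \<in> ?W \<Longrightarrow> ?le x y \<or> ?le y x" using o by blast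
  qed
qed

theorem proposition2:
  fixes M :: "('s::finite, 'a::finite, 'r) mdp" and T :: nat and \<tau> :: real
  assumes "valid_mdp M"
    and "wealth_order_ok M T"
  shows "(0 < \<tau> \<and> \<tau> \<le> 1 \<longrightarrow>
            (\<exists>\<pi>. det_wealth_markov M T \<pi> \<and> lower_optimal M T \<tau> \<pi>)) \<and>
         (0 \<le> \<tau> \<and> \<tau> < 1 \<longrightarrow>
            (\<exists>\<pi>. det_wealth_markov M T \<pi> \<and> upper_optimal M T \<tau> \<pi>))"
proof (intro conjI impI)
  define W where "W = wealth_levels M T"
  define le where "le = leW M"
  interpret tord W le unfolding W_def le_def by (rule tord_wl[OF assms(2)])
  have p0: "\<forall>w\<in>W. 0 \<le> wprob M T \<pi> w" if "valid_policy T \<pi>" for \<pi>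
    using wprob_nonneg[OF assms(1) that] by auto
  have p1: "sum (wprob M T \<pi>) W = 1" if "valid_policy T \<pi>" for \<pi>
    using wprob_sum1[OF assms(1) that] by (simp add: W_def)
  have ex_valid: "valid_policy T (dpol M (\<lambda>_. 0) T)" by (rule dpol_valid)
  assume t: "0 < \<tau> \<and> \<tau> \<le> 1"
  let ?LQ = "\<lambda>\<pi>. lower_quantile M T \<pi> \<tau>"
  have LQ: "?LQ \<pi> \<in> W \<and> \<tau> \<le> (\<Sum>w'\<in>{w'\<in>W. le w' (?LQ \<pi>)}. wprob M T \<pi> w') \<and>
     (\<forall>w'\<in>W. \<tau> \<le> (\<Sum>w''\<in>{w''\<in>W. le w'' w'}. wprob M T \<pi> w'') \<longrightarrow> le (?LQ \<pi>) w')"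
    if "valid_policy T \<pi>" for \<pi>
    unfolding lower_quantile_def cdfW_def W_def[symmetric] le_def[symmetric]
    by (rule theI'[OF lq_ex[OF p0[OF that] p1[OF that]]]) (use t in auto)
  let ?Qs = "?LQ ` {\<pi>. valid_policy T \<pi>}"
  have "?Qs \<subseteq> W"
  proof
    fix x assume "x \<in> ?Qs"
    then obtain \<pi> where "valid_policy T \<pi>" "x = ?LQ \<pi>" by blast
    then show "x \<in> W" using LQ[OF \<open>valid_policy T \<pi>\<close>, THEN conjunct1] by simp
  qed
  moreover have "?Qs \<noteq> {}" using ex_valid by auto
  moreover have "finite ?Qs" by (rule finite_subset[OF \<open>?Qs \<subseteq> W\<close> fin])
  ultimately obtain qs where qs: "qs \<in> ?Qs" "\<forall>x\<in>?Qs. le x qs"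
    using has_max[of ?Qs] by auto
  then obtain \<pi>0 where \<pi>0: "valid_policy T \<pi>0" "?LQ \<pi>0 = qs" by auto
  have qsW: "qs \<in> W" using LQ[OF \<pi>0(1)] \<pi>0(2) by simp
  let ?S = "\<lambda>\<pi>. (\<Sum>w\<in>{w\<in>W. le w qs \<and> w \<noteq> qs}. wprob M T \<pi> w)"
  have S_J: "?S \<pi> = - J M T \<pi> (\<lambda>w. - (if le w qs \<and> w \<noteq> qs then 1 else 0))" for \<pi>
    unfolding J_neg W_def le_def minus_minus by (rule sum_wprob)
  obtain \<pi>d where \<pi>d: "det_wealth_markov M T \<pi>d" "valid_policy T \<pi>d"
    "\<forall>\<pi>'. valid_policy T \<pi>' \<longrightarrow> J M T \<pi>' (\<lambda>w. - (if le w qs \<and> w \<noteq> qs then 1 else 0))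
        \<le> J M T \<pi>d (\<lambda>w. - (if le w qs \<and> w \<noteq> qs then 1 else 0))"
    using dp[OF assms(1)] by blast
  have tp: "0 < \<tau>" using t by simp
  have "le qs (?LQ \<pi>0)" using rfl[OF qsW] \<pi>0(2) by simp
  then have "?S \<pi>0 < \<tau>"
    using lq_ge[OF p0[OF \<pi>0(1)] tp LQ[OF \<pi>0(1), THEN conjunct1] LQ[OF \<pi>0(1), THEN conjunct2, THEN conjunct1]
       LQ[OF \<pi>0(1), THEN conjunct2, THEN conjunct2] qsW] by simp
  moreover have "?S \<pi>d \<le> ?S \<pi>0" unfolding S_J using \<pi>d(3)[rule_format, OF \<pi>0(1)] by simp
  ultimately have "?S \<pi>d < \<tau>" by linarith
  then have ge: "le qs (?LQ \<pi>d)"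
    using lq_ge[OF p0[OF \<pi>d(2)] tp LQ[OF \<pi>d(2), THEN conjunct1] LQ[OF \<pi>d(2), THEN conjunct2, THEN conjunct1]
       LQ[OF \<pi>d(2), THEN conjunct2, THEN conjunct2] qsW] by simp
  show "\<exists>\<pi>. det_wealth_markov M T \<pi> \<and> lower_optimal M T \<tau> \<pi>"
  proof (intro exI conjI)
    show "det_wealth_markov M T \<pi>d" by (rule \<pi>d(1))
    show "lower_optimal M T \<tau> \<pi>d"
      unfolding lower_optimal_def le_def[symmetric]
    proof (intro conjI allI impI)
      show "valid_policy T \<pi>d" by (rule \<pi>d(2))
      fix \<pi>' :: "('s, 'a) policy" assume v: "valid_policy T \<pi>'"
      then have "le (?LQ \<pi>') qs" using qs(2) by simp
      then show "le (?LQ \<pi>') (?LQ \<pi>d)"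
        using trn[OF LQ[OF v, THEN conjunct1] qsW LQ[OF \<pi>d(2), THEN conjunct1]] ge by simp
    qed
  qed
next
  define W where "W = wealth_levels M T"
  define le where "le = leW M"
  interpret tord W le unfolding W_def le_def by (rule tord_wl[OF assms(2)])
  have p0: "\<forall>w\<in>W. 0 \<le> wprob M T \<pi> w" if "valid_policy T \<pi>" for \<pi>
    using wprob_nonneg[OF assms(1) that] by auto
  have p1: "sum (wprob M T \<pi>) W = 1" if "valid_policy T \<pi>" for \<pi>
    using wprob_sum1[OF assms(1) that] by (simp add: W_def)
  have ex_valid: "valid_policy T (dpol M (\<lambda>_. 0) T)" by (rule dpol_valid)
  assume t: "0 \<le> \<tau> \<and> \<tau> < 1"
  let ?UQ = "\<lambda>\<pi>. upper_quantile M T \<pi> \<tau>"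
  have UQ: "?UQ \<pi> \<in> W \<and> 1 - \<tau> \<le> (\<Sum>w'\<in>{w'\<in>W. le (?UQ \<pi>) w'}. wprob M T \<pi> w') \<and>
     (\<forall>w'\<in>W. 1 - \<tau> \<le> (\<Sum>w''\<in>{w''\<in>W. le w' w''}. wprob M T \<pi> w'') \<longrightarrow> le w' (?UQ \<pi>))"
    if "valid_policy T \<pi>" for \<pi>
    unfolding upper_quantile_def ccdfW_def W_def[symmetric] le_def[symmetric]
    by (rule theI'[OF uq_ex[OF p0[OF that] p1[OF that]]]) (use t in auto)
  let ?Qs = "?UQ ` {\<pi>. valid_policy T \<pi>}"
  have "?Qs \<subseteq> W"
  proof
    fix x assume "x \<in> ?Qs"
    then obtain \<pi> where "valid_policy T \<pi>" "x = ?UQ \<pi>" by blast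
    then show "x \<in> W" using UQ[OF \<open>valid_policy T \<pi>\<close>, THEN conjunct1] by simp
  qed
  moreover have "?Qs \<noteq> {}" using ex_valid by auto
  moreover have "finite ?Qs" by (rule finite_subset[OF \<open>?Qs \<subseteq> W\<close> fin])
  ultimately obtain qs where qs: "qs \<in> ?Qs" "\<forall>x\<in>?Qs. le x qs"
    using has_max[of ?Qs] by auto
  then obtain \<pi>0 where \<pi>0: "valid_policy T \<pi>0" "?UQ \<pi>0 = qs" by auto
  have qsW: "qs \<in> W" using UQ[OF \<pi>0(1)] \<pi>0(2) by simp
  let ?S = "\<lambda>\<pi>. (\<Sum>w\<in>{w\<in>W. le qs w}. wprob M T \<pi> w)"
  have S_J: "?S \<pi> = J M T \<pi> (\<lambda>w. if le qs w then 1 else 0)" for \<pi>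
    unfolding W_def le_def by (rule sum_wprob)
  obtain \<pi>d where \<pi>d: "det_wealth_markov M T \<pi>d" "valid_policy T \<pi>d"
    "\<forall>\<pi>'. valid_policy T \<pi>' \<longrightarrow> J M T \<pi>' (\<lambda>w. if le qs w then 1 else 0)
        \<le> J M T \<pi>d (\<lambda>w. if le qs w then 1 else 0)"
    using dp[OF assms(1)] by blast
  have "le qs (?UQ \<pi>0)" using rfl[OF qsW] \<pi>0(2) by simp
  then have "1 - \<tau> \<le> ?S \<pi>0"
    using uq_ge[OF p0[OF \<pi>0(1)] UQ[OF \<pi>0(1), THEN conjunct1] UQ[OF \<pi>0(1), THEN conjunct2, THEN conjunct1]
       UQ[OF \<pi>0(1), THEN conjunct2, THEN conjunct2] qsW] by simp
  moreover have "?S \<pi>0 \<le> ?S \<pi>d" unfolding S_J using \<pi>d(3)[rule_format, OF \<pi>0(1)] by simp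
  ultimately have "1 - \<tau> \<le> ?S \<pi>d" by linarith
  then have ge: "le qs (?UQ \<pi>d)"
    using uq_ge[OF p0[OF \<pi>d(2)] UQ[OF \<pi>d(2), THEN conjunct1] UQ[OF \<pi>d(2), THEN conjunct2, THEN conjunct1]
       UQ[OF \<pi>d(2), THEN conjunct2, THEN conjunct2] qsW] by simp
  show "\<exists>\<pi>. det_wealth_markov M T \<pi> \<and> upper_optimal M T \<tau> \<pi>"
  proof (intro exI conjI)
    show "det_wealth_markov M T \<pi>d" by (rule \<pi>d(1))
    show "upper_optimal M T \<tau> \<pi>d"
      unfolding upper_optimal_def le_def[symmetric]
    proof (intro conjI allI impI)
      show "valid_policy T \<pi>d" by (rule \<pi>d(2))
      fix \<pi>' :: "('s, 'a) policy" assume v: "valid_policy T \<pi>'"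
      then have "le (?UQ \<pi>') qs" using qs(2) by simp
      then show "le (?UQ \<pi>') (?UQ \<pi>d)"
        using trn[OF UQ[OF v, THEN conjunct1] qsW UQ[OF \<pi>d(2), THEN conjunct1]] ge by simp
    qed
  qed
qed

end
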